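(* Let $\Omega$ be a finite set, $K\ge 1$ the number of labels, and let $A$ be a symmetric real $|\Omega|\times|\Omega|$ affinity matrix; put $d=A\mathbf{1}$ and $D=\mathrm{diag}(d)$. For a labeling $S:\Omega\to\{1,\dots,K\}$ identify each segment $S^k=\{p:S_p=k\}$ with its indicator vector in $\{0,1\}^{\Omega}$. Consider one of the three clustering objectives (defined for labelings with all segments nonempty; for NC assume $d_p>0$ for all $p$): (AA) $E_A(S)=-\sum_k \frac{{S^k}'AS^k}{\mathbf{1}'S^k}$, with $\mathcal{K}=\delta I+A$, $w=\mathbf{1}$; (AC) $E_A(S)=\sum_k \frac{{S^k}'(D-A)S^k}{\mathbf{1}'S^k}$, with $\mathcal{K}=\delta I+A-D$, $w=\mathbf{1}$; (NC) $E_A(S)=-\sum_k \frac{{S^k}'AS^k}{d'S^k}$, with $\mathcal{K}=\delta D+A$, $w=d$; where $\delta\in\mathbb{R}$ is chosen large enough that the corresponding $\mathcal{K}$ is positive semi-definite. Define $\hat e(X)=-\frac{X'\mathcal{K}X}{w'X}$ and, for $w'X>0$, $$\nabla\hat e(X)= w\,\frac{X'\mathcal{K}X}{(w'X)^2}-\mathcal{K}X\,\frac{2}{w'X}.$$ Let $\mathcal{F}$ be any collection of subsets (factors) $c\subseteq\Omega$, let $E_c$ be arbitrary real functions of the restricted labeling $S_c=(S_p)_{p\in c}$, let $\gamma\in\mathbb{R}$, and let $E(S)=E_A(S)+\gamma\sum_{c\in\mathcal{F}}E_c(S_c)$. Let $S_t$ be any labeling with all segments nonempty and define $$a_t(S)=\sum_{k=1}^K\nabla\hat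 e(S^k_t)'\,S^k+\gamma\sum_{c\in\mathcal{F}}E_c(S_c).$$ Then for every labeling $S$ with all segments nonempty, $E(S)\le a_t(S)+K\delta$, with equality for $S=S_t$; i.e. $a_t+K\delta$ is an auxiliary function for $E$ at $S_t$.
   Context: An auxiliary function for an energy $E$ at $S_t$ is a function $a$ with $E(S)\le a(S)$ for all admissible $S$ and $E(S_t)=a(S_t)$. $\mathbf{1}$ is the all-ones vector, $I$ the identity matrix, and $'$ denotes transpose. *)

theory Defs
  imports "HOL-Analysis.Analysis"
begin

text \<open>The finite set Omega is the finite index type 'n; vectors are real^'n,
  matrices real^'n^'n. Labels are natural numbers 1..K.\<close>

datatype objective = AA | AC | NC

definition ones :: "real^'n" where
  "ones = vec 1"

definition seg :: "('n \<Rightarrow> nat) \<Rightarrow> nat \<Rightarrow> real^'n" where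
  "seg S k = (\<chi> p. if S p = k then 1 else 0)"

definition degv :: "real^'n^'n \<Rightarrow> real^'n" where
  "degv A = A *v ones"

definition Dmat :: "real^'n^'n \<Rightarrow> real^'n^'n" where
  "Dmat A = (\<chi> i j. if i = j then degv A $ i else 0)"

definition Kmat :: "objective \<Rightarrow> real \<Rightarrow> real^'n^'n \<Rightarrow> real^'n^'n" where
  "Kmat obj \<delta> A = (case obj of
      AA \<Rightarrow> \<delta> *\<^sub>R mat 1 + A
    | AC \<Rightarrow> \<delta> *\<^sub>R mat 1 + A - Dmat A
    | NC \<Rightarrow> \<delta> *\<^sub>R Dmat A + A)"

definition wvec :: "objective \<Rightarrow> real^'n^'n \<Rightarrow> real^'n" where
  "wvec obj A = (case obj of NC \<Rightarrow> degv A | _ \<Rightarrow> ones)"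

definition EA :: "objective \<Rightarrow> real^'n^'n \<Rightarrow> nat \<Rightarrow> ('n \<Rightarrow> nat) \<Rightarrow> real" where
  "EA obj A K S = (case obj of
      AA \<Rightarrow> - (\<Sum>k=1..K. (seg S k \<bullet> (A *v seg S k)) / (ones \<bullet> seg S k))
    | AC \<Rightarrow> (\<Sum>k=1..K. (seg S k \<bullet> ((Dmat A - A) *v seg S k)) / (ones \<bullet> seg S k))
    | NC \<Rightarrow> - (\<Sum>k=1..K. (seg S k \<bullet> (A *v seg S k)) / (degv A \<bullet> seg S k)))"

definition ehat :: "real^'n^'n \<Rightarrow> real^'n \<Rightarrow> real^'n \<Rightarrow> real" where
  "ehat M w X = - (X \<bullet> (M *v X)) / (w \<bullet> X)"

definition grad_ehat :: "real^'n^'n \<Rightarrow> real^'n \<Rightarrow> real^'n \<Rightarrow> real^'n" where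
  "grad_ehat M w X = ((X \<bullet> (M *v X)) / (w \<bullet> X)^2) *\<^sub>R w - (2 / (w \<bullet> X)) *\<^sub>R (M *v X)"

definition psd :: "real^'n^'n \<Rightarrow> bool" where
  "psd M \<longleftrightarrow> (\<forall>x. 0 \<le> x \<bullet> (M *v x))"

definition admissible :: "nat \<Rightarrow> ('n \<Rightarrow> nat) \<Rightarrow> bool" where
  "admissible K S \<longleftrightarrow> (\<forall>p. S p \<in> {1..K}) \<and> (\<forall>k\<in>{1..K}. \<exists>p. S p = k)"

definition Efull :: "objective \<Rightarrow> real^'n^'n \<Rightarrow> nat \<Rightarrow> real \<Rightarrow> 'n set set
      \<Rightarrow> ('n set \<Rightarrow> ('n \<Rightarrow> nat) \<Rightarrow> real) \<Rightarrow> ('n \<Rightarrow> nat) \<Rightarrow> real" where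
  "Efull obj A K \<gamma> F Ec S = EA obj A K S + \<gamma> * (\<Sum>c\<in>F. Ec c (restrict S c))"

definition aux_at :: "objective \<Rightarrow> real^'n^'n \<Rightarrow> real \<Rightarrow> nat \<Rightarrow> real \<Rightarrow> 'n set set
      \<Rightarrow> ('n set \<Rightarrow> ('n \<Rightarrow> nat) \<Rightarrow> real) \<Rightarrow> ('n \<Rightarrow> nat) \<Rightarrow> ('n \<Rightarrow> nat) \<Rightarrow> real" where
  "aux_at obj A \<delta> K \<gamma> F Ec St S =
     (\<Sum>k=1..K. grad_ehat (Kmat obj \<delta> A) (wvec obj A) (seg St k) \<bullet> seg S k)
     + \<gamma> * (\<Sum>c\<in>F. Ec c (restrict S c))"

end

theory Submission
  imports Defs
begin

lemma inner_sym:
  fixes M :: "real^'n^'n"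
  assumes "\<And>i j. M$i$j = M$j$i"
  shows "X \<bullet> (M *v Y) = Y \<bullet> (M *v X)"
proof -
  have "X \<bullet> (M *v Y) = (\<Sum>i\<in>UNIV. \<Sum>j\<in>UNIV. X$i * M$i$j * Y$j)"
    by (simp add: inner_vec_def matrix_vector_mult_def sum_distrib_left mult.assoc)
  also have "\<dots> = (\<Sum>j\<in>UNIV. \<Sum>i\<in>UNIV. X$i * M$i$j * Y$j)" by (rule sum.swap)
  also have "\<dots> = Y \<bullet> (M *v X)"
    by (simp add: inner_vec_def matrix_vector_mult_def sum_distrib_left assms mult.commute mult.left_commute)
  finally show ?thesis .
qed

lemma key:
  fixes M :: "real^'n^'n"
  assumes psd: "psd M" and sym: "\<And>i j. M$i$j = M$j$i"
    and a: "w \<bullet> X > 0" and b: "w \<bullet> Y > 0"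
  shows "ehat M w X \<le> grad_ehat M w Y \<bullet> X"
proof -
  define t where "t = (w \<bullet> X) / (w \<bullet> Y)"
  have "0 \<le> (X - t *\<^sub>R Y) \<bullet> (M *v (X - t *\<^sub>R Y))" using psd unfolding psd_def by blast
  also have "\<dots> = X \<bullet> (M *v X) - 2 * t * (X \<bullet> (M *v Y)) + t^2 * (Y \<bullet> (M *v Y))"
    using inner_sym[OF sym, of X Y]
    by (simp add: matrix_vector_mult_diff_distrib matrix_vector_mult_scaleR inner_diff_left
        inner_diff_right algebra_simps power2_eq_square)
  finally have h: "0 \<le> X \<bullet> (M *v X) - 2 * t * (X \<bullet> (M *v Y)) + t^2 * (Y \<bullet> (M *v Y))" .
  have "grad_ehat M w Y \<bullet> X = (Y \<bullet> (M *v Y)) * (w \<bullet> X) / (w \<bullet> Y)^2 - 2 / (w \<bullet> Y) * (X \<bullet> (M *v Y))"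
    unfolding grad_ehat_def using inner_sym[OF sym, of X Y]
    by (simp add: inner_diff_right inner_commute)
  moreover have "(w \<bullet> X) * ((Y \<bullet> (M *v Y)) * (w \<bullet> X) / (w \<bullet> Y)^2 - 2 / (w \<bullet> Y) * (X \<bullet> (M *v Y)))
      = t^2 * (Y \<bullet> (M *v Y)) - 2 * t * (X \<bullet> (M *v Y))"
    using a b unfolding t_def by (simp add: field_simps power2_eq_square)
  ultimately have "(w \<bullet> X) * (grad_ehat M w Y \<bullet> X) \<ge> (w \<bullet> X) * ehat M w X"
    using h a unfolding ehat_def by simp
  thus ?thesis using a by simp
qed

lemma grad_self:
  assumes "w \<bullet> Y \<noteq> 0"
  shows "grad_ehat M w Y \<bullet> Y = ehat M w Y"
  using assms unfolding grad_ehat_def ehat_def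
  by (simp add: inner_diff_right inner_commute field_simps power2_eq_square)

lemma if0_mult: "(if P then (a::real) else 0) * b = (if P then a * b else 0)" by simp

lemma seg01: "seg S k $ p * seg S k $ p = seg S k $ p"
  by (simp add: seg_def)

lemma seg_mat1: "seg S k \<bullet> (mat 1 *v seg S k) = ones \<bullet> seg S k"
  by (auto simp: ones_def inner_vec_def seg_def intro!: sum.cong)

lemma seg_self: "seg S k \<bullet> seg S k = ones \<bullet> seg S k"
  using seg_mat1 by simp

lemma seg_D: "seg S k \<bullet> (Dmat A *v seg S k) = degv A \<bullet> seg S k"
proof -
  have "Dmat A *v seg S k = (\<chi> i. degv A $ i * seg S k $ i)"
    by (simp add: vec_eq_iff matrix_vector_mult_def Dmat_def if0_mult)
  thus ?thesis by (simp add: inner_vec_def seg_def mult.commute if_distrib cong: if_cong)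
qed

lemma ones_pos:
  assumes "\<exists>p. S p = k" shows "ones \<bullet> seg S k > (0::real)"
proof -
  obtain p where p: "S p = k" using assms by blast
  have "1 \<le> (\<Sum>q\<in>UNIV. ones $ q * seg S k $ q)"
    using member_le_sum[of p UNIV "\<lambda>q. ones $ q * seg S k $ q"] p
    by (simp add: ones_def seg_def)
  thus ?thesis by (simp add: inner_vec_def)
qed

lemma deg_pos:
  assumes "\<exists>p. S p = k" and "\<forall>p. degv A $ p > 0" shows "degv A \<bullet> seg S k > (0::real)"
proof -
  obtain p where p: "S p = k" using assms by blast
  have "degv A $ p \<le> (\<Sum>q\<in>UNIV. degv A $ q * seg S k $ q)"
    using member_le_sum[of p UNIV "\<lambda>q. degv A $ q * seg S k $ q"] p assms(2)
    by (simp add: seg_def less_imp_le)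
  thus ?thesis using assms(2)[rule_format, of p] by (simp add: inner_vec_def)
qed

lemma K_sym:
  assumes "transpose A = A"
  shows "Kmat obj \<delta> A $ i $ j = Kmat obj \<delta> A $ j $ i"
proof -
  have "A $ i $ j = A $ j $ i" using assms by (metis transpose_def vec_lambda_beta)
  thus ?thesis by (cases obj) (auto simp: Kmat_def mat_def Dmat_def)
qed

lemma w_pos:
  assumes "obj = NC \<longrightarrow> (\<forall>p. degv A $ p > 0)" and "\<exists>p. S p = k"
  shows "wvec obj A \<bullet> seg S k > 0"
  using assms by (cases obj) (simp_all add: wvec_def ones_pos deg_pos)

lemma EA_eq:
  assumes "obj = NC \<longrightarrow> (\<forall>p. degv A $ p > 0)" and "admissible K S"
  shows "EA obj A K S = (\<Sum>k=1..K. ehat (Kmat obj \<delta> A) (wvec obj A) (seg S k)) + real K * \<delta>"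
proof -
  have ne: "\<And>k. k \<in> {1..K} \<Longrightarrow> \<exists>p. S p = k" using assms(2) unfolding admissible_def by blast
  have "\<And>k. k \<in> {1..K} \<Longrightarrow> ehat (Kmat obj \<delta> A) (wvec obj A) (seg S k) + \<delta> =
     (case obj of AA \<Rightarrow> - ((seg S k \<bullet> (A *v seg S k)) / (ones \<bullet> seg S k))
      | AC \<Rightarrow> (seg S k \<bullet> ((Dmat A - A) *v seg S k)) / (ones \<bullet> seg S k)
      | NC \<Rightarrow> - ((seg S k \<bullet> (A *v seg S k)) / (degv A \<bullet> seg S k)))"
  proof -
    fix k assume k: "k \<in> {1..K}"
    have o: "ones \<bullet> seg S k > 0" using ones_pos ne[OF k] by blast
    show "?thesis k"
    proof (cases obj)
      case AA thus ?thesis using o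
        by (simp add: scaleR_matrix_vector_assoc[symmetric] ehat_def Kmat_def wvec_def matrix_vector_mult_add_rdistrib
            inner_add_right seg_mat1 seg_self field_simps)
    next
      case AC thus ?thesis using o
        by (simp add: scaleR_matrix_vector_assoc[symmetric] ehat_def Kmat_def wvec_def matrix_vector_mult_add_rdistrib
            matrix_vector_mult_diff_rdistrib inner_add_right inner_diff_right seg_mat1 seg_self seg_D field_simps)
    next
      case NC
      have d: "degv A \<bullet> seg S k > 0" using deg_pos ne[OF k] assms(1) NC by blast
      thus ?thesis using NC
        by (simp add: scaleR_matrix_vector_assoc[symmetric] ehat_def Kmat_def wvec_def matrix_vector_mult_add_rdistrib
            inner_add_right seg_D field_simps)
    qed
  qed
  hence "(\<Sum>k=1..K. ehat (Kmat obj \<delta> A) (wvec obj A) (seg S k) + \<delta>) = EA obj A K S"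
    by (cases obj) (simp_all add: EA_def sum_negf)
  thus ?thesis by (simp add: sum.distrib)
qed

theorem theorem2:
  fixes obj :: objective and A :: "real^'n^'n" and K :: nat and \<delta> \<gamma> :: real
    and F :: "'n set set" and Ec :: "'n set \<Rightarrow> ('n \<Rightarrow> nat) \<Rightarrow> real"
    and St :: "'n \<Rightarrow> nat"
  assumes "K \<ge> 1"
    and "transpose A = A"
    and "obj = NC \<longrightarrow> (\<forall>p. degv A $ p > 0)"
    and "psd (Kmat obj \<delta> A)"
    and "admissible K St"
  shows "(\<forall>S. admissible K S \<longrightarrow>
            Efull obj A K \<gamma> F Ec S \<le> aux_at obj A \<delta> K \<gamma> F Ec St S + real K * \<delta>)
         \<and> Efull obj A K \<gamma> F Ec St = aux_at obj A \<delta> K \<gamma> F Ec St St + real K * \<delta>"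
proof
  have neT: "\<And>k. k \<in> {1..K} \<Longrightarrow> \<exists>p. St p = k" using assms(5) unfolding admissible_def by blast
  show "\<forall>S. admissible K S \<longrightarrow>
            Efull obj A K \<gamma> F Ec S \<le> aux_at obj A \<delta> K \<gamma> F Ec St S + real K * \<delta>"
  proof (intro allI impI)
    fix S :: "'n \<Rightarrow> nat" assume S: "admissible K S"
    have ne: "\<And>k. k \<in> {1..K} \<Longrightarrow> \<exists>p. S p = k" using S unfolding admissible_def by blast
    have "(\<Sum>k=1..K. ehat (Kmat obj \<delta> A) (wvec obj A) (seg S k))
        \<le> (\<Sum>k=1..K. grad_ehat (Kmat obj \<delta> A) (wvec obj A) (seg St k) \<bullet> seg S k)"
      by (rule sum_mono, rule key[OF assms(4) K_sym[OF assms(2)]])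
        (simp_all add: w_pos[OF assms(3)] ne neT)
    thus "Efull obj A K \<gamma> F Ec S \<le> aux_at obj A \<delta> K \<gamma> F Ec St S + real K * \<delta>"
      unfolding Efull_def aux_at_def EA_eq[OF assms(3) S, of \<delta>] by simp
  qed
  have "(\<Sum>k=1..K. ehat (Kmat obj \<delta> A) (wvec obj A) (seg St k))
        = (\<Sum>k=1..K. grad_ehat (Kmat obj \<delta> A) (wvec obj A) (seg St k) \<bullet> seg St k)"
    by (rule sum.cong[OF refl], rule grad_self[symmetric])
      (metis w_pos[OF assms(3)] neT less_irrefl)
  thus "Efull obj A K \<gamma> F Ec St = aux_at obj A \<delta> K \<gamma> F Ec St St + real K * \<delta>"
    unfolding Efull_def aux_at_def EA_eq[OF assms(3) assms(5), of \<delta>] by simp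
qed

end
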